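(* In the network model described in the context, let $\pi$ be an admissible cyclic policy with maximum inter-scheduling times $k^{\pi}_e$, and suppose the slice widths satisfy $w_{i,e}\ge\lambda_i k^{\pi}_e$ for all $e\in\mathcal{T}^{(i)}$. Then the delay deficit of any packet belonging to flow $f_i$ is never larger than zero when it arrives at a new link of its route.
   Context: Network model: directed graph $G=(V,E)$, slotted time, link capacities $c_e$, interference given by a conflict graph on links with feasible activation sets $\mathcal{M}$. Flow $f_i$ has fixed route $\mathcal{T}^{(i)}$ and deterministic fluid arrival rate $\lambda_i>0$ per slot at its source. Link $e\in\mathcal{T}^{(i)}$ reserves a slice $w_{i,e}$ for $f_i$ with its own first-come-first-served queue (initially empty). An admissible policy activates $\mu^\pi(t)\in\mathcal{M}$ in each slot and is work-conserving (an activated link serves $\min\{Q_{i,e}(t),w_{i,e}\}$ from each slice queue; served units proceed to the next link of the route). A cyclic policy satisfies $\mu^\pi(t)=\mu^\pi(t+K^\pi)$ for all $t\ge0$. The maximum inter-scheduling time $k_e^\pi$ of link $e$ is the largest number of slots between two consecutive activations of $e$ (cyclically over the period), so that $e$ is activated at least once in every window of $k_e^\pi$ consecutive slots. For a packet $l$ of $f_i$ arriving at its source at time $t_0^l$, its age at time $t$ is $a^l(t)=t-t_0^l$, and its delay deficit is $\delta^l(t)=a^l(t)-\sum_{e\in\tilde{T}^{(l)}}k_e^\pi$, where $\tilde{T}^{(l)}$ is the set of links of its route at which it has already been served (so $\delta^l=0$ on arrival at the source, it increases by one each slot, and decreases by $k_e^\pi$ when the packet is served at link $e$). *)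

theory Defs
  imports Complex_Main
begin

text \<open>Fluid, slotted-time model of one flow's slice queues along its route.
  Conventions: at every integer time t the source receives lam units (eligible
  for service in slot t); a link activated in slot t serves min(backlog, width)
  from the slice queue; the amount served in slot t arrives at the next link of
  the route at time t+1 (eligible for service in slot t+1).
  cum_out mu r lam w j t = total amount served by hop j (link r!j) during slots < t.\<close>

fun cum_out :: "(nat \<Rightarrow> 'e set) \<Rightarrow> 'e list \<Rightarrow> real \<Rightarrow> ('e \<Rightarrow> real) \<Rightarrow> nat \<Rightarrow> nat \<Rightarrow> real" where
  "cum_out mu r lam w j 0 = 0"
| "cum_out mu r lam w j (Suc t) =
     cum_out mu r lam w j t +
     (if r ! j \<in> mu t
      then min ((if j = 0 then lam * real (Suc t) else cum_out mu r lam w (j - 1) t)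
                - cum_out mu r lam w j t) (w (r ! j))
      else 0)"

definition cum_in :: "(nat \<Rightarrow> 'e set) \<Rightarrow> 'e list \<Rightarrow> real \<Rightarrow> ('e \<Rightarrow> real) \<Rightarrow> nat \<Rightarrow> nat \<Rightarrow> real" where
  "cum_in mu r lam w j t = (if j = 0 then lam * real (Suc t) else cum_out mu r lam w (j - 1) t)"

definition cyclic_policy :: "(nat \<Rightarrow> 'e set) \<Rightarrow> nat \<Rightarrow> bool" where
  "cyclic_policy mu K \<longleftrightarrow> K > 0 \<and> (\<forall>t. mu (t + K) = mu t)"

definition max_inter_sched :: "(nat \<Rightarrow> 'e set) \<Rightarrow> 'e \<Rightarrow> nat" where
  "max_inter_sched mu e =
     Max {b - a | a b. a < b \<and> e \<in> mu a \<and> e \<in> mu b \<and> (\<forall>s. a < s \<and> s < b \<longrightarrow> e \<notin> mu s)}"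

text \<open>Fluid packets are identified by their FCFS position x \<ge> 0 in the flow's
  cumulative arrival stream; packet x arrives at the source at the time t with
  lam*t \<le> x < lam*(t+1).\<close>
definition src_arrival :: "real \<Rightarrow> real \<Rightarrow> nat" where
  "src_arrival lam x = nat \<lfloor>x / lam\<rfloor>"

definition served_in_slot :: "(nat \<Rightarrow> 'e set) \<Rightarrow> 'e list \<Rightarrow> real \<Rightarrow> ('e \<Rightarrow> real) \<Rightarrow> real \<Rightarrow> nat \<Rightarrow> nat \<Rightarrow> bool" where
  "served_in_slot mu r lam w x j tau \<longleftrightarrow>
     cum_out mu r lam w j tau \<le> x \<and> x < cum_out mu r lam w j (Suc tau)"

definition served_links :: "(nat \<Rightarrow> 'e set) \<Rightarrow> 'e list \<Rightarrow> real \<Rightarrow> ('e \<Rightarrow> real) \<Rightarrow> real \<Rightarrow> nat \<Rightarrow> 'e set" where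
  "served_links mu r lam w x t =
     {r ! m | m. m < length r \<and> (\<exists>tau < t. served_in_slot mu r lam w x m tau)}"

definition delay_deficit :: "(nat \<Rightarrow> 'e set) \<Rightarrow> 'e list \<Rightarrow> real \<Rightarrow> ('e \<Rightarrow> real) \<Rightarrow> real \<Rightarrow> nat \<Rightarrow> int" where
  "delay_deficit mu r lam w x t =
     int t - int (src_arrival lam x) - (\<Sum>e \<in> served_links mu r lam w x t. int (max_inter_sched mu e))"

end

theory Submission
  imports Defs
begin

lemma periodic_mod:
  assumes "cyclic_policy mu K"
  shows "mu t = mu (t mod K)"
proof -
  have perK: "mu (s + K) = mu s" for s using assms by (simp add: cyclic_policy_def)
  have per: "mu (s + n*K) = mu s" for s n
  proof (induction n)
    case (Suc n)
    have "s + Suc n * K = (s + n*K) + K" by simp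
    then show ?case using Suc perK[of "s + n*K"] by (simp only:)
  qed simp
  have "t = t mod K + (t div K) * K" by simp
  then show ?thesis using per by metis
qed

lemma window:
  assumes cyc: "cyclic_policy mu K" and act: "\<exists>t. e \<in> mu t"
  shows "\<exists>s. a \<le> s \<and> s < a + max_inter_sched mu e \<and> e \<in> mu s"
proof -
  have K0: "K > 0" using cyc by (simp add: cyclic_policy_def)
  have perK: "mu (s + K) = mu s" for s using cyc by (simp add: cyclic_policy_def)
  have perN: "mu (s + n*K) = mu s" for s n
  proof (induction n)
    case (Suc n)
    have "s + Suc n * K = (s + n*K) + K" by simp
    then show ?case using Suc perK[of "s + n*K"] by (simp only:)
  qed simp
  obtain t1 where t1: "e \<in> mu t1" using act by blast
  define r0 where "r0 = t1 mod K"
  have r0: "e \<in> mu r0" "r0 < K" using t1 periodic_mod[OF cyc, of t1] K0 by (auto simp: r0_def)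
  define G where "G = {b - a | a b. a < b \<and> e \<in> mu a \<and> e \<in> mu b \<and> (\<forall>s. a < s \<and> s < b \<longrightarrow> e \<notin> mu s)}"
  have Gsub: "G \<subseteq> {..K}"
  proof
    fix g assume "g \<in> G"
    then obtain a b where g: "g = b - a" "a < b" "e \<in> mu a" "e \<in> mu b"
      "\<forall>s. a < s \<and> s < b \<longrightarrow> e \<notin> mu s" unfolding G_def by blast
    show "g \<in> {..K}"
    proof (rule ccontr)
      assume "g \<notin> {..K}"
      then have "a < a + K" "a + K < b" using g K0 by auto
      then show False using g(3,5) perK[of a] K0 by (metis less_add_same_cancel1)
    qed
  qed
  have finG: "finite G" using Gsub finite_subset by blast
  define P where "P s = (e \<in> mu s)" for s
  define b where "b = (LEAST s. a + K \<le> s \<and> P s)"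
  have ex1: "a + K \<le> r0 + (a+1)*K \<and> P (r0 + (a+1)*K)"
  proof -
    have "a \<le> a * K" using K0 by simp
    then have "a + K \<le> r0 + (a+1)*K" by (simp add: trans_le_add2)
    then show ?thesis using r0 perN[of r0 "a+1"] by (simp add: P_def)
  qed
  have b: "a + K \<le> b" "P b" using LeastI[of "\<lambda>s. a + K \<le> s \<and> P s", OF ex1] by (auto simp: b_def)
  have bmin: "\<not> (a + K \<le> s \<and> P s)" if "s < b" for s
    using not_less_Least[of s "\<lambda>s. a + K \<le> s \<and> P s"] that by (simp add: b_def)
  define a' where "a' = (GREATEST s. s < a + K \<and> P s)"
  have ex2: "r0 < a + K \<and> P r0" using r0 by (auto simp: P_def)
  have a': "a' < a + K" "P a'"
    using GreatestI_nat[of "\<lambda>s. s < a + K \<and> P s" r0 "a+K", OF ex2] by (auto simp: a'_def)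
  have amax: "s \<le> a'" if "s < a + K" "P s" for s
    using Greatest_le_nat[of "\<lambda>s. s < a + K \<and> P s" s "a+K"] that by (auto simp: a'_def)
  have "b - a' \<in> G"
    unfolding G_def
  proof (intro CollectI exI conjI)
    show "b - a' = b - a'" by simp
    show "a' < b" using a' b by simp
    show "e \<in> mu a'" "e \<in> mu b" using a' b by (auto simp: P_def)
    show "\<forall>s. a' < s \<and> s < b \<longrightarrow> e \<notin> mu s"
    proof (intro allI impI)
      fix s assume s: "a' < s \<and> s < b"
      show "e \<notin> mu s"
      proof
        assume "e \<in> mu s"
        then have "P s" by (simp add: P_def)
        show False
        proof (cases "s < a + K")
          case True then show False using amax[OF True \<open>P s\<close>] s by simp
        next
          case False then show False using bmin[of s] s \<open>P s\<close> by simp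
        qed
      qed
    qed
  qed
  then have "b - a' \<le> max_inter_sched mu e"
    unfolding max_inter_sched_def using finG G_def by (simp add: Max_ge)
  moreover have "e \<in> mu (b - K)" using perK[of "b - K"] b K0 by (auto simp: P_def)
  ultimately show ?thesis using a' b
    by (intro exI[of _ "b - K"]) auto
qed


lemma cum_out_Suc':
  "cum_out mu r lam w j (Suc t) = cum_out mu r lam w j t +
     (if r ! j \<in> mu t then min (cum_in mu r lam w j t - cum_out mu r lam w j t) (w (r ! j)) else 0)"
  by (simp add: cum_in_def)

lemma basic:
  assumes lam: "lam \<ge> 0" and wp: "\<forall>j<length r. w (r ! j) \<ge> 0" and j: "j < length r"
  shows "(\<forall>t. 0 \<le> cum_out mu r lam w j t \<and> cum_out mu r lam w j t \<le> cum_in mu r lam w j t)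
     \<and> (\<forall>t. 0 \<le> cum_in mu r lam w j t \<and> cum_in mu r lam w j t \<le> cum_in mu r lam w j (Suc t))"
  using j
proof (induction j)
  case 0
  have I: "\<forall>t. 0 \<le> cum_in mu r lam w 0 t \<and> cum_in mu r lam w 0 t \<le> cum_in mu r lam w 0 (Suc t)"
    using lam by (simp add: cum_in_def mult_left_mono)
  have "0 \<le> cum_out mu r lam w 0 t \<and> cum_out mu r lam w 0 t \<le> cum_in mu r lam w 0 t" for t
  proof (induction t)
    case 0 then show ?case using I by simp
  next
    case (Suc t)
    have "w (r ! 0) \<ge> 0" using wp 0 by simp
    then show ?case using Suc I[rule_format, of t] unfolding cum_out_Suc'[of _ _ _ _ 0] by auto
  qed
  then show ?case using I by blast
next
  case (Suc j)
  note jl = Suc.prems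
  have IH: "\<forall>t. 0 \<le> cum_out mu r lam w j t \<and> cum_out mu r lam w j t \<le> cum_in mu r lam w j t"
     "\<forall>t. 0 \<le> cum_in mu r lam w j t \<and> cum_in mu r lam w j t \<le> cum_in mu r lam w j (Suc t)" using Suc.IH jl by auto
  have I: "\<forall>t. 0 \<le> cum_in mu r lam w (Suc j) t \<and> cum_in mu r lam w (Suc j) t \<le> cum_in mu r lam w (Suc j) (Suc t)"
  proof
    fix t
    have "w (r ! j) \<ge> 0" using wp Suc.prems by simp
    then have "cum_out mu r lam w j (Suc t) \<ge> cum_out mu r lam w j t"
      using IH unfolding cum_out_Suc'[of _ _ _ _ j] by auto
    then show "0 \<le> cum_in mu r lam w (Suc j) t \<and> cum_in mu r lam w (Suc j) t \<le> cum_in mu r lam w (Suc j) (Suc t)"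
      using IH by (simp add: cum_in_def)
  qed
  have "0 \<le> cum_out mu r lam w (Suc j) t \<and> cum_out mu r lam w (Suc j) t \<le> cum_in mu r lam w (Suc j) t" for t
  proof (induction t)
    case 0 then show ?case using I by simp
  next
    case (Suc t)
    have "w (r ! Suc j) \<ge> 0" using wp jl by simp
    then show ?case using Suc I[rule_format, of t] unfolding cum_out_Suc'[of _ _ _ _ "Suc j"] by auto
  qed
  then show ?case using I by blast
qed


context
  fixes mu :: "nat \<Rightarrow> 'e set" and r :: "'e list" and lam :: real and w :: "'e \<Rightarrow> real"
  assumes lam: "lam \<ge> 0" and wp: "\<forall>j<length r. w (r ! j) \<ge> 0"
begin

lemma O_nonneg: "j < length r \<Longrightarrow> 0 \<le> cum_out mu r lam w j t"
  using basic[OF lam wp] by blast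

lemma O_le_A: "j < length r \<Longrightarrow> cum_out mu r lam w j t \<le> cum_in mu r lam w j t"
  using basic[OF lam wp] by blast

lemma O_Suc_le_A: "j < length r \<Longrightarrow> cum_out mu r lam w j (Suc t) \<le> cum_in mu r lam w j t"
  using O_le_A[of j t] wp unfolding cum_out_Suc' by auto

lemma O_mono1: "j < length r \<Longrightarrow> cum_out mu r lam w j t \<le> cum_out mu r lam w j (Suc t)"
  using O_le_A[of j t] wp unfolding cum_out_Suc' by auto

lemma O_mono: "j < length r \<Longrightarrow> t \<le> t' \<Longrightarrow> cum_out mu r lam w j t \<le> cum_out mu r lam w j t'"
  using O_mono1 by (metis lift_Suc_mono_le)

lemma O_hop: "Suc m < length r \<Longrightarrow> cum_out mu r lam w (Suc m) t \<le> cum_out mu r lam w m t"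
proof (cases t)
  case 0 then show ?thesis by simp
next
  case (Suc t')
  assume a: "Suc m < length r"
  have "cum_out mu r lam w (Suc m) t \<le> cum_out mu r lam w m t'"
    using O_Suc_le_A[OF a, of t'] Suc by (simp add: cum_in_def)
  also have "\<dots> \<le> cum_out mu r lam w m t" using O_mono1[of m t'] a Suc by simp
  finally show ?thesis .
qed

lemma O_hops: "j < length r \<Longrightarrow> m \<le> j \<Longrightarrow> cum_out mu r lam w j t \<le> cum_out mu r lam w m t"
proof (induction j)
  case 0 then show ?case by simp
next
  case (Suc j)
  show ?case
  proof (cases "m = Suc j")
    case False
    then have "cum_out mu r lam w j t \<le> cum_out mu r lam w m t" using Suc by simp
    then show ?thesis using O_hop[of j t] Suc.prems by simp
  qed simp
qed

lemma step:
  assumes j: "j < length r"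
    and LB: "\<forall>s. lam * (real s - real P + 1) \<le> cum_in mu r lam w j s"
    and win: "\<forall>a. \<exists>s. a \<le> s \<and> s < a + k \<and> r ! j \<in> mu s"
    and wid: "w (r ! j) \<ge> lam * real k"
  shows "lam * (real t - real (P + k) + 1) \<le> cum_out mu r lam w j t"
proof (induction t rule: less_induct)
  case (less t)
  show ?case
  proof (cases "t < k")
    case True
    then have "real t - real (P + k) + 1 \<le> 0" by simp
    then have "lam * (real t - real (P + k) + 1) \<le> 0" using lam by (simp add: mult_nonneg_nonpos)
    then show ?thesis using O_nonneg[OF j, of t] by linarith
  next
    case False
    obtain s where s: "t - k \<le> s" "s < t - k + k" "r ! j \<in> mu s" using win by blast
    have st: "s < t" "real t \<le> real s + real k" using s False by auto
    have IH: "lam * (real s - real (P + k) + 1) \<le> cum_out mu r lam w j s" using less st by simp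
    have bound: "lam * (real t - real (P + k) + 1) \<le> lam * (real s - real P + 1)"
      using st lam by (intro mult_left_mono) auto
    have "lam * (real s - real P + 1) \<le> cum_out mu r lam w j (Suc s)"
    proof (cases "cum_in mu r lam w j s - cum_out mu r lam w j s \<le> w (r ! j)")
      case True
      then have "cum_out mu r lam w j (Suc s) = cum_in mu r lam w j s"
        using s(3) unfolding cum_out_Suc' by simp
      then show ?thesis using LB by simp
    next
      case False
      then have "cum_out mu r lam w j (Suc s) = cum_out mu r lam w j s + w (r ! j)"
        using s(3) unfolding cum_out_Suc' by simp
      moreover have "lam * (real s - real P + 1) = lam * (real s - real (P + k) + 1) + lam * real k"
        by (simp add: algebra_simps)
      ultimately show ?thesis using IH wid by linarith
    qed
    also have "\<dots> \<le> cum_out mu r lam w j t" using O_mono[OF j, of "Suc s" t] st by simp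
    finally show ?thesis using bound by linarith
  qed
qed

lemma invariant:
  assumes win: "\<forall>j<length r. \<forall>a. \<exists>s. a \<le> s \<and> s < a + kk j \<and> r ! j \<in> mu s"
    and wid: "\<forall>j<length r. w (r ! j) \<ge> lam * real (kk j)"
  shows "j < length r \<Longrightarrow> lam * (real t - real (\<Sum>m<Suc j. kk m) + 1) \<le> cum_out mu r lam w j t"
proof (induction j arbitrary: t)
  case 0
  have LB: "\<forall>s. lam * (real s - real 0 + 1) \<le> cum_in mu r lam w 0 s"
    by (simp add: cum_in_def algebra_simps)
  show ?case using step[OF 0 LB, of "kk 0" t] win wid 0 by simp
next
  case (Suc j)
  have LB: "\<forall>s. lam * (real s - real (\<Sum>m<Suc j. kk m) + 1) \<le> cum_in mu r lam w (Suc j) s"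
    using Suc by (simp add: cum_in_def)
  show ?case using step[OF Suc.prems LB, of "kk (Suc j)" t] win wid Suc.prems by simp
qed

end


lemma crossing:
  fixes f :: "nat \<Rightarrow> real"
  shows "f 0 \<le> x \<Longrightarrow> x < f n \<Longrightarrow> \<exists>t<n. f t \<le> x \<and> x < f (Suc t)"
proof (induction n)
  case 0 then show ?case by simp
next
  case (Suc n)
  show ?case
  proof (cases "x < f n")
    case True then show ?thesis using Suc by (meson less_SucI)
  next
    case False then show ?thesis using Suc.prems by (intro exI[of _ n]) auto
  qed
qed

theorem lemma2:
  fixes E :: "'e set" and M :: "'e set set" and mu :: "nat \<Rightarrow> 'e set" and K :: nat
    and F :: "'f set" and route :: "'f \<Rightarrow> 'e list" and lam :: "'f \<Rightarrow> real"
    and w :: "'f \<Rightarrow> 'e \<Rightarrow> real" and i :: 'f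
  assumes M_sub: "\<forall>S \<in> M. S \<subseteq> E"
    and admissible: "\<forall>t. mu t \<in> M"
    and cyclic: "cyclic_policy mu K"
    and routes: "\<forall>f \<in> F. route f \<noteq> [] \<and> distinct (route f) \<and> set (route f) \<subseteq> E"
    and rates: "\<forall>f \<in> F. lam f > 0"
    and finite_k: "\<forall>f \<in> F. \<forall>e \<in> set (route f). \<exists>t. e \<in> mu t"
    and widths: "\<forall>f \<in> F. \<forall>e \<in> set (route f). w f e \<ge> lam f * real (max_inter_sched mu e)"
    and i_flow: "i \<in> F"
  shows "\<forall>x \<ge> 0. \<forall>j tau. Suc j < length (route i)
           \<and> served_in_slot mu (route i) (lam i) (w i) x j tau
           \<longrightarrow> delay_deficit mu (route i) (lam i) (w i) x (Suc tau) \<le> 0"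
proof (intro allI impI)
  fix x :: real and j tau
  assume x0: "x \<ge> 0" and H: "Suc j < length (route i) \<and> served_in_slot mu (route i) (lam i) (w i) x j tau"
  define r where "r = route i"
  define l where "l = lam i"
  define ww where "ww = w i"
  define kk where "kk m = max_inter_sched mu (r ! m)" for m
  have l0: "l > 0" using rates i_flow by (simp add: l_def)
  have dist: "distinct r" using routes i_flow by (simp add: r_def)
  have jl: "j < length r" using H by (simp add: r_def)
  have srv: "cum_out mu r l ww j tau \<le> x" "x < cum_out mu r l ww j (Suc tau)"
    using H by (auto simp: served_in_slot_def r_def l_def ww_def)
  have wid: "\<forall>j<length r. ww (r ! j) \<ge> l * real (kk j)"
    using widths i_flow by (simp add: r_def ww_def l_def kk_def)
  have wp: "\<forall>j<length r. ww (r ! j) \<ge> 0"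
  proof (intro allI impI)
    fix j assume "j < length r"
    then have "ww (r ! j) \<ge> l * real (kk j)" using wid by simp
    moreover have "l * real (kk j) \<ge> 0" using l0 by simp
    ultimately show "ww (r ! j) \<ge> 0" by linarith
  qed
  have win: "\<forall>j<length r. \<forall>a. \<exists>s. a \<le> s \<and> s < a + kk j \<and> r ! j \<in> mu s"
  proof (intro allI impI)
    fix j a assume "j < length r"
    then have "\<exists>t. r ! j \<in> mu t" using finite_k i_flow by (simp add: r_def)
    then show "\<exists>s. a \<le> s \<and> s < a + kk j \<and> r ! j \<in> mu s"
      using window[OF cyclic] by (simp add: kk_def)
  qed
  define t0 where "t0 = src_arrival l x"
  have "x / l \<ge> 0" using x0 l0 by simp
  then have t0r: "real t0 = of_int \<lfloor>x / l\<rfloor>" by (simp add: t0_def src_arrival_def)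
  have "x / l < real t0 + 1" using t0r by linarith
  then have xl: "x < l * (real t0 + 1)" using l0 by (simp add: field_simps)
  define S where "S = (\<Sum>m<Suc j. kk m)"
  have inv: "l * (real (t0 + S) - real S + 1) \<le> cum_out mu r l ww j (t0 + S)"
    using invariant[where kk=kk and j=j and t="t0+S" and mu=mu and r=r and lam=l and w=ww] l0 wp win wid jl by (simp add: S_def)
  have "x < cum_out mu r l ww j (t0 + S)" using inv xl by simp
  then have tauS: "Suc tau \<le> t0 + S"
    using srv O_mono[where j=j and t'=tau and t="t0+S" and mu=mu and r=r and lam=l and w=ww] l0 wp jl by force
  have sub: "(\<lambda>m. r ! m) ` {..<Suc j} \<subseteq> served_links mu r l ww x (Suc tau)"
  proof
    fix e assume "e \<in> (\<lambda>m. r ! m) ` {..<Suc j}"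
    then obtain m where m: "m \<le> j" "e = r ! m" using less_Suc_eq_le by auto
    have ml: "m < length r" using m jl by simp
    have "cum_out mu r l ww j (Suc tau) \<le> cum_out mu r l ww m (Suc tau)"
      using O_hops[where j=j and m=m and t="Suc tau" and mu=mu and r=r and lam=l and w=ww] l0 wp jl m by simp
    then have "x < cum_out mu r l ww m (Suc tau)" using srv by simp
    moreover have "cum_out mu r l ww m 0 \<le> x" using x0 by simp
    ultimately obtain t' where "t' < Suc tau" "served_in_slot mu r l ww x m t'"
      using crossing[of "cum_out mu r l ww m" x "Suc tau"] by (auto simp: served_in_slot_def)
    then show "e \<in> served_links mu r l ww x (Suc tau)"
      unfolding served_links_def using m ml by blast
  qed
  have fin: "finite (served_links mu r l ww x (Suc tau))"
  proof (rule finite_subset)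
    show "served_links mu r l ww x (Suc tau) \<subseteq> set r" unfolding served_links_def by auto
  qed simp
  have inj: "inj_on (\<lambda>m. r ! m) {..<Suc j}"
    using dist jl by (auto simp: inj_on_def nth_eq_iff_index_eq)
  have "int S = (\<Sum>m<Suc j. int (kk m))" by (simp add: S_def)
  also have "\<dots> = (\<Sum>e\<in>(\<lambda>m. r ! m) ` {..<Suc j}. int (max_inter_sched mu e))"
    using sum.reindex[OF inj, of "\<lambda>e. int (max_inter_sched mu e)"] by (simp add: kk_def)
  also have "\<dots> \<le> (\<Sum>e\<in>served_links mu r l ww x (Suc tau). int (max_inter_sched mu e))"
    by (rule sum_mono2[OF fin sub]) simp
  finally have "int S \<le> (\<Sum>e\<in>served_links mu r l ww x (Suc tau). int (max_inter_sched mu e))" .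
  then show "delay_deficit mu (route i) (lam i) (w i) x (Suc tau) \<le> 0"
    using tauS unfolding delay_deficit_def r_def[symmetric] l_def[symmetric] ww_def[symmetric] t0_def[symmetric]
    by linarith
qed

end
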